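(* An ES combination operator $\nabla$ satisfies (ESF1)–(ESF8) if and only if there exists a unique faithful assignment $\Phi\mapsto\succeq_\Phi$ such that $[\![B(\nabla(\Phi,E))]\!]=\max([\![B(E)]\!],\succeq_\Phi)$ for every profile $\Phi$ and every $E\in\mathcal E$.
   Context: Setting: an epistemic space $(\mathcal E,B,\mathcal L_{\mathcal P})$ ($\mathcal E$ nonempty, $B:\mathcal E\to\mathcal L_{\mathcal P}$ with image modulo equivalence exactly the consistent formulas over the finite variable set $\mathcal P$; $\mathcal W_{\mathcal P}$ valuations, $[\![\phi]\!]$ models); agents form a well-ordered set $\mathcal S$; a society is a nonempty finite $N\subseteq\mathcal S$; an $N$-profile is $\Phi:N\to\mathcal E$, $E_i=\Phi(i)$, identified with $E_i$ when $N=\{i\}$; profiles on $\{i_1<\dots<i_n\}$ and $\{j_1<\dots<j_m\}$ are equivalent ($\equiv$) if $n=m$ and entries coincide position-wise; $\Phi\upharpoonright_M$ restriction; partitions $\{N_1,N_2\}$ have nonempty disjoint parts. An ES combination operator maps (profile, $E$) to $\nabla(\Phi,E)\in\mathcal E$. Postulates: (ESF1) $B(\nabla(\Phi,E))\vdash B(E)$; (ESF2) if $\Phi\equiv\Phi'$ and $B(E)\equiv B(E')$ then $B(\nabla(\Phi,E))\equiv B(\nabla(\Phi',E'))$; (ESF3) if $B(E)\equiv B(E')\wedge B(E'')$ then $B(\nabla(\Phi,E'))\wedge B(E'')\vdash B(\nabla(\Phi,E))$; (ESF4) if moreover $B(\nabla(\Phi,E'))\wedge B(E'')\nvdash\bot$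 then $B(\nabla(\Phi,E))\vdash B(\nabla(\Phi,E'))\wedge B(E'')$; (ESF5) if $E_j\ne E_k$ ($j,k$ agents) there is $E'$ with $B(\nabla(E_j,E'))\not\equiv B(\nabla(E_k,E'))$; (ESF6) if $\bigwedge_{i\in N}B(E_i)\wedge B(E)\nvdash\bot$ then $B(\nabla(\Phi,E))\equiv\bigwedge_{i\in N}B(E_i)\wedge B(E)$; (ESF7) $B(\nabla(\Phi\upharpoonright_{N_1},E))\wedge B(\nabla(\Phi\upharpoonright_{N_2},E))\vdash B(\nabla(\Phi,E))$; (ESF8) if that conjunction is consistent then $B(\nabla(\Phi,E))\vdash B(\nabla(\Phi\upharpoonright_{N_1},E))\wedge B(\nabla(\Phi\upharpoonright_{N_2},E))$. An assignment maps each profile to a total preorder $\succeq_\Phi$ on $\mathcal W_{\mathcal P}$; it is basic if $\Phi\equiv\Psi$ implies $\succeq_\Phi=\succeq_\Psi$; it is faithful if basic and: (1) $E_j\ne E_k$ implies $\succeq_{E_j}\ne\succeq_{E_k}$; (2) if $\bigwedge_{i\in N}B(E_i)\nvdash\bot$ then $[\![\bigwedge_{i\in N}B(E_i)]\!]=\max(\succeq_\Phi)$; (3) $w\succeq_{\Phi\upharpoonright_{N_1}}w'$ and $w\succeq_{\Phi\upharpoonright_{N_2}}w'$ imply $w\succeq_\Phi w'$; (4) $w\succeq_{\Phi\upharpoonright_{N_1}}w'$ and $w\succ_{\Phi\upharpoonright_{N_2}}w'$ imply $w\succ_\Phi w'$. $\max(C,\succeq)=\{c\in C:c\succeq x\ \forall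 x\in C\}$. *)

theory Defs
  imports Main
begin

text \<open>The finite set of propositional variables P is the (finite, nonempty) type 'v.
  A valuation is the set of variables it makes true; W_P = UNIV :: 'v set set.\<close>

datatype 'v form = Atom 'v | Top | Bot | Neg "'v form" | And "'v form" "'v form"
  | Or "'v form" "'v form" | Imp "'v form" "'v form"

fun sat :: "'v set \<Rightarrow> 'v form \<Rightarrow> bool" where
  "sat w (Atom p) = (p \<in> w)"
| "sat w Top = True"
| "sat w Bot = False"
| "sat w (Neg f) = (\<not> sat w f)"
| "sat w (And f g) = (sat w f \<and> sat w g)"
| "sat w (Or f g) = (sat w f \<or> sat w g)"
| "sat w (Imp f g) = (sat w f \<longrightarrow> sat w g)"

definition models :: "'v::finite form \<Rightarrow> 'v set set" where
  "models f = {w. sat w f}"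

definition entails :: "'v::finite form \<Rightarrow> 'v form \<Rightarrow> bool" (infix "\<turnstile>" 50) where
  "f \<turnstile> g \<longleftrightarrow> models f \<subseteq> models g"

definition fequiv :: "'v::finite form \<Rightarrow> 'v form \<Rightarrow> bool" (infix "\<equiv>\<^sub>F" 50) where
  "f \<equiv>\<^sub>F g \<longleftrightarrow> models f = models g"

definition consistent :: "'v::finite form \<Rightarrow> bool" where
  "consistent f \<longleftrightarrow> \<not> (f \<turnstile> Bot)"

text \<open>Epistemic states are elements of the type 'e (types are nonempty).
  B maps each epistemic state to a formula; its image modulo equivalence
  is exactly the set of consistent formulas.\<close>

definition epistemic_space :: "('e \<Rightarrow> 'v::finite form) \<Rightarrow> bool" where
  "epistemic_space B \<longleftrightarrow> (\<forall>E. consistent (B E)) \<and>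
     (\<forall>\<phi>. consistent \<phi> \<longrightarrow> (\<exists>E. B E \<equiv>\<^sub>F \<phi>))"

text \<open>Agents are elements of a well-ordered type 'a. A profile on a society N
  (nonempty finite set of agents) is a partial map with domain N.\<close>

definition is_profile :: "('a \<rightharpoonup> 'e) \<Rightarrow> bool" where
  "is_profile \<Phi> \<longleftrightarrow> finite (dom \<Phi>) \<and> dom \<Phi> \<noteq> {}"

definition entries :: "('a::wellorder \<rightharpoonup> 'e) \<Rightarrow> 'e list" where
  "entries \<Phi> = map (\<lambda>i. the (\<Phi> i)) (sorted_list_of_set (dom \<Phi>))"

definition prof_equiv :: "('a::wellorder \<rightharpoonup> 'e) \<Rightarrow> ('a \<rightharpoonup> 'e) \<Rightarrow> bool" where
  "prof_equiv \<Phi> \<Psi> \<longleftrightarrow> entries \<Phi> = entries \<Psi>"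

definition is_partition2 :: "'a set \<Rightarrow> 'a set \<Rightarrow> 'a set \<Rightarrow> bool" where
  "is_partition2 N N1 N2 \<longleftrightarrow> N1 \<noteq> {} \<and> N2 \<noteq> {} \<and> N1 \<inter> N2 = {} \<and> N1 \<union> N2 = N"

definition bigconj :: "('e \<Rightarrow> 'v::finite form) \<Rightarrow> ('a::wellorder \<rightharpoonup> 'e) \<Rightarrow> 'v form" where
  "bigconj B \<Phi> = foldr And (map B (entries \<Phi>)) Top"

type_synonym ('a, 'e) esop = "('a \<rightharpoonup> 'e) \<Rightarrow> 'e \<Rightarrow> 'e"

definition ESF1 :: "('e \<Rightarrow> 'v::finite form) \<Rightarrow> ('a::wellorder, 'e) esop \<Rightarrow> bool" where
  "ESF1 B nab \<longleftrightarrow> (\<forall>\<Phi> E. is_profile \<Phi> \<longrightarrow> B (nab \<Phi> E) \<turnstile> B E)"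

definition ESF2 :: "('e \<Rightarrow> 'v::finite form) \<Rightarrow> ('a::wellorder, 'e) esop \<Rightarrow> bool" where
  "ESF2 B nab \<longleftrightarrow> (\<forall>\<Phi> \<Phi>' E E'. is_profile \<Phi> \<longrightarrow> is_profile \<Phi>' \<longrightarrow>
     prof_equiv \<Phi> \<Phi>' \<longrightarrow> B E \<equiv>\<^sub>F B E' \<longrightarrow> B (nab \<Phi> E) \<equiv>\<^sub>F B (nab \<Phi>' E'))"

definition ESF3 :: "('e \<Rightarrow> 'v::finite form) \<Rightarrow> ('a::wellorder, 'e) esop \<Rightarrow> bool" where
  "ESF3 B nab \<longleftrightarrow> (\<forall>\<Phi> E E' E''. is_profile \<Phi> \<longrightarrow> B E \<equiv>\<^sub>F And (B E') (B E'') \<longrightarrow>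
     And (B (nab \<Phi> E')) (B E'') \<turnstile> B (nab \<Phi> E))"

definition ESF4 :: "('e \<Rightarrow> 'v::finite form) \<Rightarrow> ('a::wellorder, 'e) esop \<Rightarrow> bool" where
  "ESF4 B nab \<longleftrightarrow> (\<forall>\<Phi> E E' E''. is_profile \<Phi> \<longrightarrow> B E \<equiv>\<^sub>F And (B E') (B E'') \<longrightarrow>
     consistent (And (B (nab \<Phi> E')) (B E'')) \<longrightarrow>
     B (nab \<Phi> E) \<turnstile> And (B (nab \<Phi> E')) (B E''))"

definition ESF5 :: "('e \<Rightarrow> 'v::finite form) \<Rightarrow> ('a::wellorder, 'e) esop \<Rightarrow> bool" where
  "ESF5 B nab \<longleftrightarrow> (\<forall>(j::'a) k Ej Ek. Ej \<noteq> Ek \<longrightarrow>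
     (\<exists>E'. \<not> (B (nab [j \<mapsto> Ej] E') \<equiv>\<^sub>F B (nab [k \<mapsto> Ek] E'))))"

definition ESF6 :: "('e \<Rightarrow> 'v::finite form) \<Rightarrow> ('a::wellorder, 'e) esop \<Rightarrow> bool" where
  "ESF6 B nab \<longleftrightarrow> (\<forall>\<Phi> E. is_profile \<Phi> \<longrightarrow> consistent (And (bigconj B \<Phi>) (B E)) \<longrightarrow>
     B (nab \<Phi> E) \<equiv>\<^sub>F And (bigconj B \<Phi>) (B E))"

definition ESF7 :: "('e \<Rightarrow> 'v::finite form) \<Rightarrow> ('a::wellorder, 'e) esop \<Rightarrow> bool" where
  "ESF7 B nab \<longleftrightarrow> (\<forall>\<Phi> N1 N2 E. is_profile \<Phi> \<longrightarrow> is_partition2 (dom \<Phi>) N1 N2 \<longrightarrow>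
     And (B (nab (\<Phi> |` N1) E)) (B (nab (\<Phi> |` N2) E)) \<turnstile> B (nab \<Phi> E))"

definition ESF8 :: "('e \<Rightarrow> 'v::finite form) \<Rightarrow> ('a::wellorder, 'e) esop \<Rightarrow> bool" where
  "ESF8 B nab \<longleftrightarrow> (\<forall>\<Phi> N1 N2 E. is_profile \<Phi> \<longrightarrow> is_partition2 (dom \<Phi>) N1 N2 \<longrightarrow>
     consistent (And (B (nab (\<Phi> |` N1) E)) (B (nab (\<Phi> |` N2) E))) \<longrightarrow>
     B (nab \<Phi> E) \<turnstile> And (B (nab (\<Phi> |` N1) E)) (B (nab (\<Phi> |` N2) E)))"

definition ESF_all :: "('e \<Rightarrow> 'v::finite form) \<Rightarrow> ('a::wellorder, 'e) esop \<Rightarrow> bool" where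
  "ESF_all B nab \<longleftrightarrow> ESF1 B nab \<and> ESF2 B nab \<and> ESF3 B nab \<and> ESF4 B nab \<and>
     ESF5 B nab \<and> ESF6 B nab \<and> ESF7 B nab \<and> ESF8 B nab"

text \<open>An assignment maps each profile to a relation on valuations;
  only its values on profiles matter.\<close>
type_synonym ('a, 'e, 'v) assignment = "('a \<rightharpoonup> 'e) \<Rightarrow> 'v set \<Rightarrow> 'v set \<Rightarrow> bool"

definition total_preorder_on_W :: "('v set \<Rightarrow> 'v set \<Rightarrow> bool) \<Rightarrow> bool" where
  "total_preorder_on_W R \<longleftrightarrow> (\<forall>w. R w w) \<and> (\<forall>u v w. R u v \<longrightarrow> R v w \<longrightarrow> R u w)
     \<and> (\<forall>u v. R u v \<or> R v u)"

definition strict :: "('v set \<Rightarrow> 'v set \<Rightarrow> bool) \<Rightarrow> 'v set \<Rightarrow> 'v set \<Rightarrow> bool" where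
  "strict R u v \<longleftrightarrow> R u v \<and> \<not> R v u"

definition maxel :: "'v set set \<Rightarrow> ('v set \<Rightarrow> 'v set \<Rightarrow> bool) \<Rightarrow> 'v set set" where
  "maxel C R = {c \<in> C. \<forall>x\<in>C. R c x}"

definition is_assignment :: "('a::wellorder, 'e, 'v::finite) assignment \<Rightarrow> bool" where
  "is_assignment asg \<longleftrightarrow> (\<forall>\<Phi>. is_profile \<Phi> \<longrightarrow> total_preorder_on_W (asg \<Phi>))"

definition basic :: "('a::wellorder, 'e, 'v::finite) assignment \<Rightarrow> bool" where
  "basic asg \<longleftrightarrow> is_assignment asg \<and> (\<forall>\<Phi> \<Psi>. is_profile \<Phi> \<longrightarrow> is_profile \<Psi> \<longrightarrow>
     prof_equiv \<Phi> \<Psi> \<longrightarrow> asg \<Phi> = asg \<Psi>)"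

definition faithful :: "('e \<Rightarrow> 'v::finite form) \<Rightarrow> ('a::wellorder, 'e, 'v) assignment \<Rightarrow> bool" where
  "faithful B asg \<longleftrightarrow> basic asg
   \<and> (\<forall>(j::'a) k Ej Ek. Ej \<noteq> Ek \<longrightarrow> asg [j \<mapsto> Ej] \<noteq> asg [k \<mapsto> Ek])
   \<and> (\<forall>\<Phi>. is_profile \<Phi> \<longrightarrow> consistent (bigconj B \<Phi>) \<longrightarrow>
        models (bigconj B \<Phi>) = maxel UNIV (asg \<Phi>))
   \<and> (\<forall>\<Phi> N1 N2 w w'. is_profile \<Phi> \<longrightarrow> is_partition2 (dom \<Phi>) N1 N2 \<longrightarrow>
        asg (\<Phi> |` N1) w w' \<longrightarrow> asg (\<Phi> |` N2) w w' \<longrightarrow> asg \<Phi> w w')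
   \<and> (\<forall>\<Phi> N1 N2 w w'. is_profile \<Phi> \<longrightarrow> is_partition2 (dom \<Phi>) N1 N2 \<longrightarrow>
        asg (\<Phi> |` N1) w w' \<longrightarrow> strict (asg (\<Phi> |` N2)) w w' \<longrightarrow> strict (asg \<Phi>) w w')"

definition represents :: "('e \<Rightarrow> 'v::finite form) \<Rightarrow> ('a::wellorder, 'e) esop \<Rightarrow> ('a, 'e, 'v) assignment \<Rightarrow> bool" where
  "represents B nab asg \<longleftrightarrow> (\<forall>\<Phi> E. is_profile \<Phi> \<longrightarrow>
     models (B (nab \<Phi> E)) = maxel (models (B E)) (asg \<Phi>))"

end

theory Submission
  imports Defs
begin


lemma models_And[simp]: "models (And f g) = models f \<inter> models g"
  by (auto simp: models_def)

lemma consistent_iff: "consistent f \<longleftrightarrow> models f \<noteq> {}"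
  by (auto simp: consistent_def entails_def models_def)

lemma models_Top[simp]: "models (Top::'v::finite form) = UNIV"
  by (auto simp: models_def)

definition charf :: "'v list \<Rightarrow> 'v set \<Rightarrow> 'v form" where
  "charf xs w = foldr (\<lambda>p f. And (if p \<in> w then Atom p else Neg (Atom p)) f) xs Top"

lemma sat_charf: "sat u (charf xs w) \<longleftrightarrow> (\<forall>p\<in>set xs. p \<in> u \<longleftrightarrow> p \<in> w)"
  unfolding charf_def by (induction xs) auto

definition disjf :: "'v list \<Rightarrow> 'v set list \<Rightarrow> 'v form" where
  "disjf xs ys = foldr (\<lambda>w f. Or (charf xs w) f) ys Bot"

lemma sat_disjf: "sat u (disjf xs ys) \<longleftrightarrow> (\<exists>w\<in>set ys. sat u (charf xs w))"
  unfolding disjf_def by (induction ys) auto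

lemma exists_form: "\<exists>\<phi>::'v::finite form. models \<phi> = S"
proof -
  obtain xs :: "'v list" where xs: "set xs = UNIV" using finite_list[of "UNIV::'v set"] by auto
  have "finite S" by simp
  then obtain ys where ys: "set ys = S" using finite_list by blast
  have "models (disjf xs ys) = S"
  proof -
    have e: "\<And>u w::'v set. (\<forall>p. (p\<in>u) = (p\<in>w)) \<longleftrightarrow> u = w" by auto
    show ?thesis unfolding models_def using xs ys by (auto simp: sat_disjf sat_charf e)
  qed
  then show ?thesis by blast
qed

lemma realize:
  assumes "epistemic_space B" "S \<noteq> {}"
  shows "\<exists>E. models (B E) = S"
proof -
  obtain \<phi> where "models \<phi> = S" using exists_form by blast
  then have "consistent \<phi>" using assms(2) by (simp add: consistent_iff)
  then obtain E where "B E \<equiv>\<^sub>F \<phi>" using assms(1) unfolding epistemic_space_def by blast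
  then show ?thesis using \<open>models \<phi> = S\<close> by (auto simp: fequiv_def)
qed

lemma B_ne: "epistemic_space B \<Longrightarrow> models (B E) \<noteq> {}"
  unfolding epistemic_space_def by (simp add: consistent_iff)



lemma tpD: assumes "total_preorder_on_W R"
  shows "R w w" "R u v \<Longrightarrow> R v w \<Longrightarrow> R u w" "R u v \<or> R v u"
  using assms unfolding total_preorder_on_W_def by blast+

lemma maxel_sub: "maxel S R \<subseteq> S" by (auto simp: maxel_def)

lemma maxel_restr:
  assumes "total_preorder_on_W R" "maxel S R \<inter> T \<noteq> {}" "T \<subseteq> S"
  shows "maxel T R = maxel S R \<inter> T"
proof
  show "maxel S R \<inter> T \<subseteq> maxel T R" using assms(3) by (auto simp: maxel_def)
  obtain m where m: "m \<in> maxel S R" "m \<in> T" using assms(2) by blast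
  show "maxel T R \<subseteq> maxel S R \<inter> T"
  proof
    fix w assume w: "w \<in> maxel T R"
    then have "R w m" using m by (auto simp: maxel_def)
    then have "\<forall>x\<in>S. R w x" using m tpD(2)[OF assms(1)] by (auto simp: maxel_def)
    then show "w \<in> maxel S R \<inter> T" using w assms(3) by (auto simp: maxel_def)
  qed
qed

lemma prof_restrict:
  assumes "is_profile \<Phi>" "is_partition2 (dom \<Phi>) N1 N2"
  shows "is_profile (\<Phi> |` N1)" "is_profile (\<Phi> |` N2)"
  using assms unfolding is_profile_def is_partition2_def
  by (auto simp: dom_restrict Int_absorb1)

lemma prof_single: "is_profile [j \<mapsto> E]"
  by (simp add: is_profile_def)

lemma part_sym: "is_partition2 N N1 N2 \<Longrightarrow> is_partition2 N N2 N1"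
  by (auto simp: is_partition2_def)

lemma maxel_pair: "R w w \<Longrightarrow> w \<in> maxel {w, w'} R \<longleftrightarrow> R w w'"
  by (auto simp: maxel_def)

lemma dirA:
  fixes B :: "'e \<Rightarrow> 'v::finite form" and nab :: "('a::wellorder, 'e) esop"
    and asg :: "('a, 'e, 'v) assignment"
  assumes es: "epistemic_space B" and f: "faithful B asg" and r: "represents B nab asg"
  shows "ESF_all B nab"
proof -
  have rep: "\<And>\<Phi> E. is_profile \<Phi> \<Longrightarrow> models (B (nab \<Phi> E)) = maxel (models (B E)) (asg \<Phi>)"
    using r by (auto simp: represents_def)
  have tp: "\<And>\<Phi>. is_profile \<Phi> \<Longrightarrow> total_preorder_on_W (asg \<Phi>)"
    using f by (auto simp: faithful_def basic_def is_assignment_def)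
  have bas: "\<And>\<Phi> \<Psi>. is_profile \<Phi> \<Longrightarrow> is_profile \<Psi> \<Longrightarrow> prof_equiv \<Phi> \<Psi> \<Longrightarrow> asg \<Phi> = asg \<Psi>"
    using f by (auto simp: faithful_def basic_def)
  have f1: "\<And>(j::'a) k Ej Ek. Ej \<noteq> Ek \<Longrightarrow> asg [j \<mapsto> Ej] \<noteq> asg [k \<mapsto> Ek]"
    using f by (auto simp: faithful_def)
  have f2: "\<And>\<Phi>. is_profile \<Phi> \<Longrightarrow> consistent (bigconj B \<Phi>) \<Longrightarrow>
        models (bigconj B \<Phi>) = maxel UNIV (asg \<Phi>)"
    using f by (auto simp: faithful_def)
  have f3: "\<And>\<Phi> N1 N2 w w'. is_profile \<Phi> \<Longrightarrow> is_partition2 (dom \<Phi>) N1 N2 \<Longrightarrow>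
        asg (\<Phi> |` N1) w w' \<Longrightarrow> asg (\<Phi> |` N2) w w' \<Longrightarrow> asg \<Phi> w w'"
    using f unfolding faithful_def by blast
  have f4: "\<And>\<Phi> N1 N2 w w'. is_profile \<Phi> \<Longrightarrow> is_partition2 (dom \<Phi>) N1 N2 \<Longrightarrow>
        asg (\<Phi> |` N1) w w' \<Longrightarrow> strict (asg (\<Phi> |` N2)) w w' \<Longrightarrow> strict (asg \<Phi>) w w'"
    using f unfolding faithful_def by blast
  have E1: "ESF1 B nab" unfolding ESF1_def entails_def
    by (intro allI impI) (simp add: rep maxel_sub)
  have E2: "ESF2 B nab" unfolding ESF2_def fequiv_def
  proof (intro allI impI)
    fix \<Phi> \<Phi>' :: "'a \<rightharpoonup> 'e" and E E' :: 'e assume p: "is_profile \<Phi>" and p': "is_profile \<Phi>'" and q: "prof_equiv \<Phi> \<Phi>'"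
      and e: "models (B E) = models (B E')"
    show "models (B (nab \<Phi> E)) = models (B (nab \<Phi>' E'))"
      unfolding rep[OF p] rep[OF p'] e bas[OF p p' q] ..
  qed
  have E3: "ESF3 B nab" unfolding ESF3_def entails_def fequiv_def
    by (auto simp: rep maxel_def)
  have E4: "ESF4 B nab" unfolding ESF4_def entails_def fequiv_def consistent_iff
  proof (intro allI impI)
    fix \<Phi> :: "'a \<rightharpoonup> 'e" and E E' E'' :: 'e
    assume p: "is_profile \<Phi>" and eq: "models (B E) = models (And (B E') (B E''))"
      and c: "models (And (B (nab \<Phi> E')) (B E'')) \<noteq> {}"
    have "maxel (models (B E)) (asg \<Phi>) = maxel (models (B E')) (asg \<Phi>) \<inter> models (B E)"
      apply (rule maxel_restr[OF tp[OF p]])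
      using c eq rep[OF p] maxel_sub[of "models (B E')" "asg \<Phi>"] by auto
    then show "models (B (nab \<Phi> E)) \<subseteq> models (And (B (nab \<Phi> E')) (B E''))"
      using eq rep[OF p] by auto
  qed
  have E5: "ESF5 B nab" unfolding ESF5_def
  proof (intro allI impI)
    fix j k :: 'a and Ej Ek :: 'e assume ne: "Ej \<noteq> Ek"
    let ?a = "asg [j \<mapsto> Ej]" and ?b = "asg [k \<mapsto> Ek]"
    have ta: "total_preorder_on_W ?a" and tb: "total_preorder_on_W ?b"
      by (rule tp[OF prof_single])+
    have "\<not> (\<forall>w w'. ?a w w' = ?b w w')"
    proof
      assume "\<forall>w w'. ?a w w' = ?b w w'"
      then have "?a = ?b" by (intro ext) blast
      then show False using f1[OF ne] by blast
    qed
    then obtain w w' where d: "?a w w' \<noteq> ?b w w'" by blast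
    obtain E where E: "models (B E) = {w, w'}" using realize[OF es, of "{w,w'}"] by auto
    have "maxel {w,w'} ?a \<noteq> maxel {w,w'} ?b"
    proof
      assume eq: "maxel {w,w'} ?a = maxel {w,w'} ?b"
      have "?a w w' = ?b w w'" using maxel_pair[of ?a w w', OF tpD(1)[OF ta]] maxel_pair[of ?b w w', OF tpD(1)[OF tb]] eq by simp
      with d show False by simp
    qed
    then have "\<not> B (nab [j \<mapsto> Ej] E) \<equiv>\<^sub>F B (nab [k \<mapsto> Ek] E)"
      unfolding fequiv_def rep[OF prof_single] E .
    then show "\<exists>E'. \<not> B (nab [j \<mapsto> Ej] E') \<equiv>\<^sub>F B (nab [k \<mapsto> Ek] E')" by blast
  qed
  have E6: "ESF6 B nab" unfolding ESF6_def
  proof (intro allI impI)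
    fix \<Phi> :: "'a \<rightharpoonup> 'e" and E :: 'e assume p: "is_profile \<Phi>" and c: "consistent (And (bigconj B \<Phi>) (B E))"
    have cc: "consistent (bigconj B \<Phi>)" using c by (auto simp: consistent_iff)
    have m: "models (bigconj B \<Phi>) = maxel UNIV (asg \<Phi>)" using f2[OF p cc] .
    have "maxel (models (B E)) (asg \<Phi>) = maxel UNIV (asg \<Phi>) \<inter> models (B E)"
      apply (rule maxel_restr[OF tp[OF p]])
      using c m by (auto simp: consistent_iff)
    then show "B (nab \<Phi> E) \<equiv>\<^sub>F And (bigconj B \<Phi>) (B E)"
      unfolding fequiv_def using rep[OF p] m by simp
  qed
  have E7: "ESF7 B nab" unfolding ESF7_def entails_def
  proof (intro allI impI subsetI)
    fix \<Phi> :: "'a \<rightharpoonup> 'e" and N1 N2 E w assume p: "is_profile \<Phi>" and pt: "is_partition2 (dom \<Phi>) N1 N2"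
      and w: "w \<in> models (And (B (nab (\<Phi> |` N1) E)) (B (nab (\<Phi> |` N2) E)))"
    have p1: "is_profile (\<Phi> |` N1)" and p2: "is_profile (\<Phi> |` N2)" using prof_restrict[OF p pt] by auto
    from w show "w \<in> models (B (nab \<Phi> E))"
      using f3[OF p pt] by (auto simp: rep[OF p] rep[OF p1] rep[OF p2] maxel_def)
  qed
  have E8: "ESF8 B nab" unfolding ESF8_def entails_def consistent_iff
  proof (intro allI impI subsetI)
    fix \<Phi> :: "'a \<rightharpoonup> 'e" and N1 N2 E w assume p: "is_profile \<Phi>" and pt: "is_partition2 (dom \<Phi>) N1 N2"
      and c: "models (And (B (nab (\<Phi> |` N1) E)) (B (nab (\<Phi> |` N2) E))) \<noteq> {}"
      and w: "w \<in> models (B (nab \<Phi> E))"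
    have p1: "is_profile (\<Phi> |` N1)" and p2: "is_profile (\<Phi> |` N2)" using prof_restrict[OF p pt] by auto
    have pt': "is_partition2 (dom \<Phi>) N2 N1" using part_sym[OF pt] .
    obtain m where m1: "m \<in> maxel (models (B E)) (asg (\<Phi> |` N1))"
      and m2: "m \<in> maxel (models (B E)) (asg (\<Phi> |` N2))"
      using c by (auto simp: rep[OF p1] rep[OF p2])
    have wm: "w \<in> maxel (models (B E)) (asg \<Phi>)" using w rep[OF p] by simp
    then have wm': "asg \<Phi> w m" "w \<in> models (B E)" using m1 by (auto simp: maxel_def)
    have g1: "asg (\<Phi> |` N1) w m"
    proof (rule ccontr)
      assume n: "\<not> asg (\<Phi> |` N1) w m"
      then have "strict (asg (\<Phi> |` N1)) m w" using tpD(3)[OF tp[OF p1]] by (auto simp: strict_def)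
      moreover have "asg (\<Phi> |` N2) m w" using m2 wm' by (auto simp: maxel_def)
      ultimately have "strict (asg \<Phi>) m w" using f4[OF p pt'] by blast
      then show False using wm' by (auto simp: strict_def)
    qed
    have g2: "asg (\<Phi> |` N2) w m"
    proof (rule ccontr)
      assume n: "\<not> asg (\<Phi> |` N2) w m"
      then have "strict (asg (\<Phi> |` N2)) m w" using tpD(3)[OF tp[OF p2]] by (auto simp: strict_def)
      moreover have "asg (\<Phi> |` N1) m w" using m1 wm' by (auto simp: maxel_def)
      ultimately have "strict (asg \<Phi>) m w" using f4[OF p pt] by blast
      then show False using wm' by (auto simp: strict_def)
    qed
    have "w \<in> maxel (models (B E)) (asg (\<Phi> |` N1))"
      using g1 m1 wm' tpD(2)[OF tp[OF p1]] by (auto simp: maxel_def)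
    moreover have "w \<in> maxel (models (B E)) (asg (\<Phi> |` N2))"
      using g2 m2 wm' tpD(2)[OF tp[OF p2]] by (auto simp: maxel_def)
    ultimately show "w \<in> models (And (B (nab (\<Phi> |` N1) E)) (B (nab (\<Phi> |` N2) E)))"
      by (simp add: rep[OF p1] rep[OF p2])
  qed
  show ?thesis unfolding ESF_all_def using E1 E2 E3 E4 E5 E6 E7 E8 by blast
qed

lemma uniq:
  assumes es: "epistemic_space B" and p: "is_profile \<Phi>"
    and ta: "total_preorder_on_W (a \<Phi>)" and tb: "total_preorder_on_W (b \<Phi>)"
    and ra: "represents B nab a" and rb: "represents B nab b"
  shows "a \<Phi> = b \<Phi>"
proof (intro ext)
  fix w w'
  obtain E where E: "models (B E) = {w, w'}" using realize[OF es, of "{w,w'}"] by auto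
  have "maxel {w,w'} (a \<Phi>) = maxel {w,w'} (b \<Phi>)"
    using ra rb p E unfolding represents_def by (metis (no_types))
  then show "a \<Phi> w w' = b \<Phi> w w'"
    using maxel_pair[of "a \<Phi>" w w', OF tpD(1)[OF ta]] maxel_pair[of "b \<Phi>" w w', OF tpD(1)[OF tb]] by simp
qed



definition pairE :: "('e \<Rightarrow> 'v::finite form) \<Rightarrow> 'v set \<Rightarrow> 'v set \<Rightarrow> 'e" where
  "pairE B w w' = (SOME E. models (B E) = {w, w'})"

definition asgof :: "('e \<Rightarrow> 'v::finite form) \<Rightarrow> ('a::wellorder, 'e) esop \<Rightarrow> ('a, 'e, 'v) assignment" where
  "asgof B nab \<Phi> w w' = (w \<in> models (B (nab \<Phi> (pairE B w w'))))"

lemma pairE: "epistemic_space B \<Longrightarrow> models (B (pairE B w w')) = {w, w'}"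
proof -
  assume es: "epistemic_space B"
  obtain E where "models (B E) = {w, w'}" using realize[OF es, of "{w,w'}"] by blast
  then show ?thesis unfolding pairE_def by (rule someI)
qed

lemma dirB:
  fixes B :: "'e \<Rightarrow> 'v::finite form" and nab :: "('a::wellorder, 'e) esop"
  assumes es: "epistemic_space B" and A: "ESF_all B nab"
  shows "faithful B (asgof B nab) \<and> represents B nab (asgof B nab)"
proof -
  let ?R = "asgof B nab"
  have e1: "ESF1 B nab" and e2: "ESF2 B nab" and e3: "ESF3 B nab" and e4: "ESF4 B nab"
    and e5: "ESF5 B nab" and e6: "ESF6 B nab" and e7: "ESF7 B nab" and e8: "ESF8 B nab"
    using A unfolding ESF_all_def by auto
  have sub: "\<And>\<Phi> E. is_profile \<Phi> \<Longrightarrow> models (B (nab \<Phi> E)) \<subseteq> models (B E)"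
    using e1 unfolding ESF1_def entails_def by blast
  have ne: "\<And>\<Phi> E. models (B (nab \<Phi> E)) \<noteq> {}" using B_ne[OF es] by blast
  have key: "\<And>\<Phi> E E'. is_profile \<Phi> \<Longrightarrow> models (B E) \<subseteq> models (B E') \<Longrightarrow>
      models (B (nab \<Phi> E')) \<inter> models (B E) \<noteq> {} \<Longrightarrow>
      models (B (nab \<Phi> E)) = models (B (nab \<Phi> E')) \<inter> models (B E)"
  proof -
    fix \<Phi> :: "'a \<rightharpoonup> 'e" and E E' :: 'e
    assume p: "is_profile \<Phi>" and s: "models (B E) \<subseteq> models (B E')"
      and c: "models (B (nab \<Phi> E')) \<inter> models (B E) \<noteq> {}"
    have eq: "B E \<equiv>\<^sub>F And (B E') (B E)" using s by (auto simp: fequiv_def)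
    have "And (B (nab \<Phi> E')) (B E) \<turnstile> B (nab \<Phi> E)"
      using e3 p eq unfolding ESF3_def by blast
    moreover have "B (nab \<Phi> E) \<turnstile> And (B (nab \<Phi> E')) (B E)"
      using e4 p eq c unfolding ESF4_def by (auto simp: consistent_iff)
    ultimately show "models (B (nab \<Phi> E)) = models (B (nab \<Phi> E')) \<inter> models (B E)"
      by (auto simp: entails_def)
  qed
  have same: "\<And>\<Phi> E E'. is_profile \<Phi> \<Longrightarrow> models (B E) = models (B E') \<Longrightarrow>
      models (B (nab \<Phi> E)) = models (B (nab \<Phi> E'))"
    using e2 unfolding ESF2_def fequiv_def prof_equiv_def by blast
  have ch: "\<And>\<Phi> E w w'. is_profile \<Phi> \<Longrightarrow> models (B E) = {w, w'} \<Longrightarrow>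
      ?R \<Phi> w w' \<longleftrightarrow> w \<in> models (B (nab \<Phi> E))"
    unfolding asgof_def using same pairE[OF es] by metis
  have rep: "\<And>\<Phi> E. is_profile \<Phi> \<Longrightarrow> models (B (nab \<Phi> E)) = maxel (models (B E)) (?R \<Phi>)"
  proof -
    fix \<Phi> :: "'a \<rightharpoonup> 'e" and E :: 'e assume p: "is_profile \<Phi>"
    show "models (B (nab \<Phi> E)) = maxel (models (B E)) (?R \<Phi>)"
    proof
      show "models (B (nab \<Phi> E)) \<subseteq> maxel (models (B E)) (?R \<Phi>)"
      proof
        fix w assume w: "w \<in> models (B (nab \<Phi> E))"
        have wE: "w \<in> models (B E)" using w sub[OF p] by blast
        have "?R \<Phi> w x" if x: "x \<in> models (B E)" for x
        proof -
          let ?P = "pairE B w x"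
          have P: "models (B ?P) = {w, x}" using pairE[OF es] .
          have "models (B (nab \<Phi> ?P)) = models (B (nab \<Phi> E)) \<inter> models (B ?P)"
            by (rule key[OF p]) (use P wE x w in auto)
          then show ?thesis using ch[OF p P] w P by auto
        qed
        then show "w \<in> maxel (models (B E)) (?R \<Phi>)" using wE by (auto simp: maxel_def)
      qed
    next
      show "maxel (models (B E)) (?R \<Phi>) \<subseteq> models (B (nab \<Phi> E))"
      proof
        fix w assume w: "w \<in> maxel (models (B E)) (?R \<Phi>)"
        obtain x where x: "x \<in> models (B (nab \<Phi> E))" using ne by blast
        have xE: "x \<in> models (B E)" using x sub[OF p] by blast
        let ?P = "pairE B w x"
        have P: "models (B ?P) = {w, x}" using pairE[OF es] .
        have wE: "w \<in> models (B E)" and wx: "?R \<Phi> w x" using w xE by (auto simp: maxel_def)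
        have "models (B (nab \<Phi> ?P)) = models (B (nab \<Phi> E)) \<inter> models (B ?P)"
          by (rule key[OF p]) (use P wE xE x in auto)
        then show "w \<in> models (B (nab \<Phi> E))" using ch[OF p P] wx by auto
      qed
    qed
  qed
  have pair_sub: "\<And>\<Phi> w w'. is_profile \<Phi> \<Longrightarrow> models (B (nab \<Phi> (pairE B w w'))) \<subseteq> {w, w'}"
    using sub pairE[OF es] by metis
  have tp: "\<And>\<Phi>. is_profile \<Phi> \<Longrightarrow> total_preorder_on_W (?R \<Phi>)"
  proof -
    fix \<Phi> :: "'a \<rightharpoonup> 'e" assume p: "is_profile \<Phi>"
    have refl: "?R \<Phi> w w" for w
      using pair_sub[OF p, of w w] ne[of \<Phi> "pairE B w w"] unfolding asgof_def by auto
    have tot: "?R \<Phi> u v \<or> ?R \<Phi> v u" for u v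
    proof -
      have "models (B (nab \<Phi> (pairE B v u))) = models (B (nab \<Phi> (pairE B u v)))"
        by (rule same[OF p]) (simp add: pairE[OF es] insert_commute)
      then show ?thesis
        using pair_sub[OF p, of u v] ne[of \<Phi> "pairE B u v"] unfolding asgof_def by auto
    qed
    have trans: "?R \<Phi> u w" if uv: "?R \<Phi> u v" and vw: "?R \<Phi> v w" for u v w
    proof -
      obtain T where T: "models (B T) = {u, v, w}" using realize[OF es, of "{u,v,w}"] by auto
      let ?N = "models (B (nab \<Phi> T))"
      have NT: "?N \<subseteq> {u,v,w}" using sub[OF p, of T] T by simp
      have repT: "?N = maxel {u,v,w} (?R \<Phi>)" using rep[OF p, of T] T by simp
      show ?thesis
      proof (cases "?N \<inter> {u,v} = {}")
        case False
        have "models (B (nab \<Phi> (pairE B u v))) = ?N \<inter> {u,v}"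
          using key[OF p, of "pairE B u v" T] pairE[OF es, of u v] T False by auto
        then have "u \<in> ?N" using uv unfolding asgof_def by auto
        then show ?thesis using repT by (auto simp: maxel_def)
      next
        case True
        then have wN: "w \<in> ?N" and nv: "v \<notin> ?N" using NT ne[of \<Phi> T] by auto
        have "models (B (nab \<Phi> (pairE B v w))) = ?N \<inter> {v,w}"
          using key[OF p, of "pairE B v w" T] pairE[OF es, of v w] T wN by auto
        then have False using vw nv unfolding asgof_def by auto
        then show ?thesis ..
      qed
    qed
    show "total_preorder_on_W (?R \<Phi>)" unfolding total_preorder_on_W_def
      using refl tot trans by blast
  qed
  have rp: "represents B nab ?R" unfolding represents_def using rep by blast
  have bas: "basic ?R" unfolding basic_def is_assignment_def
  proof (intro conjI allI impI tp)
    fix \<Phi> \<Psi> :: "'a \<rightharpoonup> 'e" assume p: "is_profile \<Phi>" and q: "is_profile \<Psi>" and eqv: "prof_equiv \<Phi> \<Psi>"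
    show "?R \<Phi> = ?R \<Psi>"
    proof (intro ext)
      fix w w'
      have "models (B (nab \<Phi> (pairE B w w'))) = models (B (nab \<Psi> (pairE B w w')))"
        using e2 p q eqv unfolding ESF2_def fequiv_def by blast
      then show "?R \<Phi> w w' = ?R \<Psi> w w'" unfolding asgof_def by simp
    qed
  qed
  have f1: "\<forall>(j::'a) k Ej Ek. Ej \<noteq> Ek \<longrightarrow> ?R [j \<mapsto> Ej] \<noteq> ?R [k \<mapsto> Ek]"
  proof (intro allI impI notI)
    fix j k :: 'a and Ej Ek :: 'e assume ne': "Ej \<noteq> Ek" and eq: "?R [j \<mapsto> Ej] = ?R [k \<mapsto> Ek]"
    obtain E' where d: "\<not> B (nab [j \<mapsto> Ej] E') \<equiv>\<^sub>F B (nab [k \<mapsto> Ek] E')"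
      using e5 ne' unfolding ESF5_def by blast
    then show False unfolding fequiv_def rep[OF prof_single] eq by simp
  qed
  have f2: "\<forall>\<Phi>. is_profile \<Phi> \<longrightarrow> consistent (bigconj B \<Phi>) \<longrightarrow>
        models (bigconj B \<Phi>) = maxel UNIV (?R \<Phi>)"
  proof (intro allI impI)
    fix \<Phi> :: "'a \<rightharpoonup> 'e" assume p: "is_profile \<Phi>" and c: "consistent (bigconj B \<Phi>)"
    obtain U where U: "models (B U) = UNIV" using realize[OF es, of UNIV] by auto
    have "consistent (And (bigconj B \<Phi>) (B U))" using c U by (simp add: consistent_iff)
    then have "B (nab \<Phi> U) \<equiv>\<^sub>F And (bigconj B \<Phi>) (B U)" using e6 p unfolding ESF6_def by blast
    then show "models (bigconj B \<Phi>) = maxel UNIV (?R \<Phi>)"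
      using rep[OF p, of U] U by (simp add: fequiv_def)
  qed
  have f3: "\<forall>\<Phi> N1 N2 w w'. is_profile \<Phi> \<longrightarrow> is_partition2 (dom \<Phi>) N1 N2 \<longrightarrow>
        ?R (\<Phi> |` N1) w w' \<longrightarrow> ?R (\<Phi> |` N2) w w' \<longrightarrow> ?R \<Phi> w w'"
  proof (intro allI impI)
    fix \<Phi> :: "'a \<rightharpoonup> 'e" and N1 N2 w w'
    assume p: "is_profile \<Phi>" and pt: "is_partition2 (dom \<Phi>) N1 N2"
      and a1: "?R (\<Phi> |` N1) w w'" and a2: "?R (\<Phi> |` N2) w w'"
    have "And (B (nab (\<Phi> |` N1) (pairE B w w'))) (B (nab (\<Phi> |` N2) (pairE B w w')))
        \<turnstile> B (nab \<Phi> (pairE B w w'))" using e7 p pt unfolding ESF7_def by blast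
    then show "?R \<Phi> w w'" using a1 a2 unfolding asgof_def entails_def by auto
  qed
  have f4: "\<forall>\<Phi> N1 N2 w w'. is_profile \<Phi> \<longrightarrow> is_partition2 (dom \<Phi>) N1 N2 \<longrightarrow>
        ?R (\<Phi> |` N1) w w' \<longrightarrow> strict (?R (\<Phi> |` N2)) w w' \<longrightarrow> strict (?R \<Phi>) w w'"
  proof (intro allI impI)
    fix \<Phi> :: "'a \<rightharpoonup> 'e" and N1 N2 w w'
    assume p: "is_profile \<Phi>" and pt: "is_partition2 (dom \<Phi>) N1 N2"
      and a1: "?R (\<Phi> |` N1) w w'" and a2: "strict (?R (\<Phi> |` N2)) w w'"
    have p2: "is_profile (\<Phi> |` N2)" using prof_restrict[OF p pt] by auto
    let ?P = "pairE B w w'"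
    have sym: "pairE B w' w = ?P" unfolding pairE_def by (simp add: insert_commute)
    have w2: "w \<in> models (B (nab (\<Phi> |` N2) ?P))" and nw2: "w' \<notin> models (B (nab (\<Phi> |` N2) ?P))"
      using a2 unfolding strict_def asgof_def sym by auto
    have w1: "w \<in> models (B (nab (\<Phi> |` N1) ?P))" using a1 unfolding asgof_def .
    have "consistent (And (B (nab (\<Phi> |` N1) ?P)) (B (nab (\<Phi> |` N2) ?P)))"
      using w1 w2 by (auto simp: consistent_iff)
    then have "B (nab \<Phi> ?P) \<turnstile> And (B (nab (\<Phi> |` N1) ?P)) (B (nab (\<Phi> |` N2) ?P))"
      using e8 p pt unfolding ESF8_def by blast
    then have "w' \<notin> models (B (nab \<Phi> ?P))" using nw2 by (auto simp: entails_def)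
    then have "\<not> ?R \<Phi> w' w" unfolding asgof_def sym .
    moreover have "?R \<Phi> w w'" using f3 p pt a1 a2 unfolding strict_def by blast
    ultimately show "strict (?R \<Phi>) w w'" by (simp add: strict_def)
  qed
  have "faithful B ?R" unfolding faithful_def using bas f1 f2 f3 f4 by blast
  then show ?thesis using rp by blast
qed


theorem theorem2:
  fixes B :: "'e \<Rightarrow> 'v::finite form"
    and nab :: "('a::wellorder, 'e) esop"
  assumes "epistemic_space B"
  shows "ESF_all B nab \<longleftrightarrow>
    (\<exists>asg. faithful B asg \<and> represents B nab asg \<and>
      (\<forall>asg'. faithful B asg' \<and> represents B nab asg' \<longrightarrow>
         (\<forall>\<Phi>. is_profile \<Phi> \<longrightarrow> asg' \<Phi> = asg \<Phi>)))"
proof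
  assume A: "ESF_all B nab"
  have d: "faithful B (asgof B nab) \<and> represents B nab (asgof B nab)"
    using dirB[OF assms A] .
  have tp: "\<And>a \<Phi>. faithful B (a :: ('a, 'e, 'v) assignment) \<Longrightarrow> is_profile \<Phi> \<Longrightarrow> total_preorder_on_W (a \<Phi>)"
    by (auto simp: faithful_def basic_def is_assignment_def)
  show "\<exists>asg. faithful B asg \<and> represents B nab asg \<and>
      (\<forall>asg'. faithful B asg' \<and> represents B nab asg' \<longrightarrow>
         (\<forall>\<Phi>. is_profile \<Phi> \<longrightarrow> asg' \<Phi> = asg \<Phi>))"
  proof (intro exI conjI allI impI)
    show "faithful B (asgof B nab)" "represents B nab (asgof B nab)" using d by auto
    fix asg' :: "('a, 'e, 'v) assignment" and \<Phi> :: "'a \<rightharpoonup> 'e"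
    assume h: "faithful B asg' \<and> represents B nab asg'" and p: "is_profile \<Phi>"
    show "asg' \<Phi> = asgof B nab \<Phi>"
      by (rule uniq[OF assms p tp[OF _ p] tp[OF _ p]]) (use h d in auto)
  qed
next
  assume "\<exists>asg. faithful B asg \<and> represents B nab asg \<and>
      (\<forall>asg'. faithful B asg' \<and> represents B nab asg' \<longrightarrow>
         (\<forall>\<Phi>. is_profile \<Phi> \<longrightarrow> asg' \<Phi> = asg \<Phi>))"
  then obtain asg where "faithful B asg" "represents B nab asg" by blast
  then show "ESF_all B nab" using dirA[OF assms] by blast
qed

end
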